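(* Let $X$ be an FK-space containing $\phi$. Then $\phi\subseteq D_p^qS\subseteq D_p^qW\subseteq D_p^qF\subseteq D_p^qB\subseteq X$ and $\phi\subseteq D_p^qS\subseteq D_p^qW\subseteq\overline{\phi}$, where all these subspaces are computed in $X$ and $\overline{\phi}$ is the closure of $\phi$ in $X$.
   Context: An FK-space is a vector subspace of the space $w$ of all complex sequences with a complete metrizable locally convex topology in which coordinate functionals are continuous; $X'$ is its continuous dual. $\delta^j$ has $1$ in position $j$, $0$ elsewhere; $\phi=\operatorname{span}\{\delta^j\}$. $p(n)<q(n)$ are nonnegative integer sequences with $q(n)\to\infty$. For $x\in w$, $x^{(k)}=\sum_{j=1}^kx_j\delta^j$ and $T_n(x)=\frac{1}{q(n)-p(n)}\sum_{k=p(n)+1}^{q(n)}x^{(k)}$, so $f(T_n(x))=\frac{1}{q(n)-p(n)}\sum_{k=p(n)+1}^{q(n)}\sum_{j=1}^kx_jf(\delta^j)$. Subspaces: $D_p^qS=\{x\in X: T_n(x)\to x \text{ in } X\}$; $D_p^qW=\{x\in X: f(T_n(x))\to f(x)\ \forall f\in X'\}$; $D_p^qF^+=\{x\in w: \lim_n f(T_n(x))\text{ exists }\forall f\in X'\}$; $D_p^qB^+=\{x\in w:\sup_n|f(T_n(x))|<\infty\ \forall f\in X'\}$; $D_p^qF=D_p^qF^+\cap X$; $D_p^qB=D_p^qB^+\cap X$. *)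

theory Defs
  imports "HOL-Analysis.Analysis"
begin

text \<open>Sequences are modelled as functions nat => complex, indexed from 0
 (position j of the paper corresponds to index j-1 here).\<close>

type_synonym seq = "nat \<Rightarrow> complex"

definition seq_add :: "seq \<Rightarrow> seq \<Rightarrow> seq" where
  "seq_add x y = (\<lambda>j. x j + y j)"

definition seq_smult :: "complex \<Rightarrow> seq \<Rightarrow> seq" where
  "seq_smult c x = (\<lambda>j. c * x j)"

definition seq_subspace :: "seq set \<Rightarrow> bool" where
  "seq_subspace X \<longleftrightarrow> (\<lambda>j. 0) \<in> X \<and>
     (\<forall>x\<in>X. \<forall>y\<in>X. seq_add x y \<in> X) \<and> (\<forall>c. \<forall>x\<in>X. seq_smult c x \<in> X)"

definition FK_space :: "seq set \<Rightarrow> seq topology \<Rightarrow> bool" where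
  "FK_space X T \<longleftrightarrow>
     seq_subspace X \<and> topspace T = X \<and>
     continuous_map (prod_topology T T) T (\<lambda>(x, y). seq_add x y) \<and>
     continuous_map (prod_topology euclidean T) T (\<lambda>(c, x). seq_smult c x) \<and>
     (\<forall>U x. openin T U \<and> x \<in> U \<longrightarrow>
        (\<exists>V. openin T V \<and> x \<in> V \<and> V \<subseteq> U \<and>
             (\<forall>y\<in>V. \<forall>z\<in>V. \<forall>t::real. 0 \<le> t \<and> t \<le> 1 \<longrightarrow>
                (\<lambda>j. of_real t * y j + of_real (1 - t) * z j) \<in> V))) \<and>
     completely_metrizable_space T \<and>
     (\<forall>j. continuous_map T euclidean (\<lambda>x. x j))"

definition cdual :: "seq set \<Rightarrow> seq topology \<Rightarrow> (seq \<Rightarrow> complex) set" where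
  "cdual X T = {f. (\<forall>x\<in>X. \<forall>y\<in>X. f (seq_add x y) = f x + f y) \<and>
                   (\<forall>c. \<forall>x\<in>X. f (seq_smult c x) = c * f x) \<and>
                   continuous_map T euclidean f}"

definition phi :: "seq set" where
  "phi = {x. finite {j. x j \<noteq> 0}}"

definition seq_section :: "nat \<Rightarrow> seq \<Rightarrow> seq" where
  "seq_section k x = (\<lambda>j. if j < k then x j else 0)"

definition Tn :: "(nat \<Rightarrow> nat) \<Rightarrow> (nat \<Rightarrow> nat) \<Rightarrow> nat \<Rightarrow> seq \<Rightarrow> seq" where
  "Tn p q n x = (\<lambda>j. (1 / of_nat (q n - p n)) * (\<Sum>k\<in>{p n<..q n}. seq_section k x j))"

definition DS :: "(nat \<Rightarrow> nat) \<Rightarrow> (nat \<Rightarrow> nat) \<Rightarrow> seq set \<Rightarrow> seq topology \<Rightarrow> seq set" where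
  "DS p q X T = {x\<in>X. limitin T (\<lambda>n. Tn p q n x) x sequentially}"

definition DW :: "(nat \<Rightarrow> nat) \<Rightarrow> (nat \<Rightarrow> nat) \<Rightarrow> seq set \<Rightarrow> seq topology \<Rightarrow> seq set" where
  "DW p q X T = {x\<in>X. \<forall>f\<in>cdual X T. (\<lambda>n. f (Tn p q n x)) \<longlonglongrightarrow> f x}"

definition DFplus :: "(nat \<Rightarrow> nat) \<Rightarrow> (nat \<Rightarrow> nat) \<Rightarrow> seq set \<Rightarrow> seq topology \<Rightarrow> seq set" where
  "DFplus p q X T = {x. \<forall>f\<in>cdual X T. convergent (\<lambda>n. f (Tn p q n x))}"

definition DBplus :: "(nat \<Rightarrow> nat) \<Rightarrow> (nat \<Rightarrow> nat) \<Rightarrow> seq set \<Rightarrow> seq topology \<Rightarrow> seq set" where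
  "DBplus p q X T = {x. \<forall>f\<in>cdual X T. bounded (range (\<lambda>n. f (Tn p q n x)))}"

definition DF :: "(nat \<Rightarrow> nat) \<Rightarrow> (nat \<Rightarrow> nat) \<Rightarrow> seq set \<Rightarrow> seq topology \<Rightarrow> seq set" where
  "DF p q X T = DFplus p q X T \<inter> X"

definition DB :: "(nat \<Rightarrow> nat) \<Rightarrow> (nat \<Rightarrow> nat) \<Rightarrow> seq set \<Rightarrow> seq topology \<Rightarrow> seq set" where
  "DB p q X T = DBplus p q X T \<inter> X"

end

theory Submission
  imports Defs
begin


locale fkc =
  fixes X :: "seq set" and T :: "seq topology"
  assumes fk: "FK_space X T"
begin

lemma sub: "seq_subspace X" using fk by (simp add: FK_space_def)
lemma top[simp]: "topspace T = X" using fk by (simp add: FK_space_def)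
lemma add_cont: "continuous_map (prod_topology T T) T (\<lambda>(x, y). seq_add x y)"
  using fk by (simp add: FK_space_def)
lemma smult_cont: "continuous_map (prod_topology euclidean T) T (\<lambda>(c, x). seq_smult c x)"
  using fk by (simp add: FK_space_def)
lemma zero_in[simp]: "(\<lambda>j. 0) \<in> X" using sub by (simp add: seq_subspace_def)
lemma add_in: "x \<in> X \<Longrightarrow> y \<in> X \<Longrightarrow> seq_add x y \<in> X"
  using sub by (simp add: seq_subspace_def)
lemma smult_in: "x \<in> X \<Longrightarrow> seq_smult c x \<in> X"
  using sub by (simp add: seq_subspace_def)
lemma lin_in: "x \<in> X \<Longrightarrow> y \<in> X \<Longrightarrow> (\<lambda>j. a * x j + b * y j) \<in> X"
proof -
  assume "x \<in> X" "y \<in> X"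
  then have "seq_add (seq_smult a x) (seq_smult b y) \<in> X" by (simp add: add_in smult_in)
  then show ?thesis by (simp add: seq_add_def seq_smult_def)
qed
lemma lin1_in: "x \<in> X \<Longrightarrow> (\<lambda>j. a * x j) \<in> X"
  using smult_in[of x a] by (simp add: seq_smult_def)

lemma cont_add:
  assumes "continuous_map S T f" "continuous_map S T g"
  shows "continuous_map S T (\<lambda>y. seq_add (f y) (g y))"
proof -
  have "continuous_map S (prod_topology T T) (\<lambda>y. (f y, g y))"
    using assms by (rule continuous_map_pairedI)
  from continuous_map_compose[OF this add_cont] show ?thesis by (simp add: o_def)
qed

lemma cont_smult:
  assumes "continuous_map S euclidean c" "continuous_map S T f"
  shows "continuous_map S T (\<lambda>y. seq_smult (c y) (f y))"
proof -
  have "continuous_map S (prod_topology euclidean T) (\<lambda>y. (c y, f y))"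
    using assms by (rule continuous_map_pairedI)
  from continuous_map_compose[OF this smult_cont] show ?thesis by (simp add: o_def)
qed

lemma aff_cont:
  assumes "b \<in> X"
  shows "continuous_map T T (\<lambda>y j. a * y j + b j)"
proof -
  have "continuous_map T T (\<lambda>y. seq_add (seq_smult a y) b)"
    apply (rule cont_add)
     apply (rule cont_smult)
      apply simp
    using continuous_map_id[of T] apply (simp add: id_def)
    using assms by simp
  then show ?thesis by (simp add: seq_add_def seq_smult_def)
qed

lemma ray_cont:
  assumes "y \<in> X"
  shows "continuous_map euclidean T (\<lambda>s. seq_smult s y)"
  apply (rule cont_smult)
  using continuous_map_id[of euclidean] apply (simp add: id_def)
  using assms by simp

end


context fkc begin

lemma combo_limit:
  fixes N :: nat
  assumes "\<And>j. j < N \<Longrightarrow> v j \<in> X"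
    and "\<And>j. j < N \<Longrightarrow> (\<lambda>n. c n j) \<longlonglongrightarrow> d j"
  shows "limitin T (\<lambda>n. (\<lambda>i. \<Sum>j<N. c n j * v j i)) (\<lambda>i. \<Sum>j<N. d j * v j i) sequentially"
  using assms
proof (induction N)
  case 0
  then show ?case by simp
next
  case (Suc N)
  have IH: "limitin T (\<lambda>n. (\<lambda>i. \<Sum>j<N. c n j * v j i)) (\<lambda>i. \<Sum>j<N. d j * v j i) sequentially"
    using Suc by auto
  have vN: "v N \<in> X" using Suc by auto
  have cN: "limitin (prod_topology euclidean T) (\<lambda>n. (c n N, v N)) (d N, v N) sequentially"
    using Suc.prems(2)[of N] vN by (simp add: limitin_pairwise o_def)
  have L2: "limitin T (\<lambda>n. seq_smult (c n N) (v N)) (seq_smult (d N) (v N)) sequentially"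
    using continuous_map_limit[OF smult_cont cN] by (simp add: o_def)
  have P: "limitin (prod_topology T T) (\<lambda>n. ((\<lambda>i. \<Sum>j<N. c n j * v j i), seq_smult (c n N) (v N)))
       ((\<lambda>i. \<Sum>j<N. d j * v j i), seq_smult (d N) (v N)) sequentially"
    using IH L2 by (simp add: limitin_pairwise o_def)
  from continuous_map_limit[OF add_cont P] show ?case
    by (simp add: o_def seq_add_def seq_smult_def)
qed

end


lemma coef_lim:
  fixes p q :: "nat \<Rightarrow> nat"
  assumes pq: "\<And>n. p n < q n" and qinf: "filterlim q at_top sequentially"
  shows "(\<lambda>n. real (card {k\<in>{p n<..q n}. i < k}) / real (q n - p n)) \<longlonglongrightarrow> 1"
proof -
  have rq: "filterlim (\<lambda>n. real (q n)) at_top sequentially"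
    by (rule filterlim_compose[OF filterlim_real_sequentially qinf])
  have ev0: "eventually (\<lambda>n. Suc i \<le> q n) sequentially"
    using qinf filterlim_at_top by blast
  have ev: "eventually (\<lambda>n. q n > i) sequentially"
    using ev0 by (rule eventually_mono) simp
  have cardeq: "card {k\<in>{p n<..q n}. i < k} = q n - max (p n) i" for n
  proof -
    have "{k\<in>{p n<..q n}. i < k} = {max (p n) i<..q n}" by auto
    then show ?thesis by simp
  qed
  have up: "eventually (\<lambda>n. real (card {k\<in>{p n<..q n}. i < k}) / real (q n - p n) \<le> 1) sequentially"
  proof (rule always_eventually, rule allI)
    fix n
    have "real (card {k\<in>{p n<..q n}. i < k}) \<le> real (q n - p n)" unfolding cardeq by simp
    moreover have "real (q n - p n) > 0" using pq[of n] by simp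
    ultimately show "real (card {k\<in>{p n<..q n}. i < k}) / real (q n - p n) \<le> 1" by simp
  qed
  have low: "eventually (\<lambda>n. 1 - real i * inverse (real (q n)) \<le> real (card {k\<in>{p n<..q n}. i < k}) / real (q n - p n)) sequentially"
    using ev
  proof (rule eventually_mono)
    fix n assume qi: "q n > i"
    have qp: "real (q n - p n) > 0" "real (q n - p n) \<le> real (q n)" using pq[of n] by auto
    have lhs: "1 - real i * inverse (real (q n)) = (real (q n) - real i) / real (q n)"
      using qi by (simp add: field_simps)
    show "1 - real i * inverse (real (q n)) \<le> real (card {k\<in>{p n<..q n}. i < k}) / real (q n - p n)"
    proof (cases "p n \<le> i")
      case True
      then have "real (card {k\<in>{p n<..q n}. i < k}) = real (q n) - real i" unfolding cardeq using qi by simp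
      moreover have "(real (q n) - real i) / real (q n) \<le> (real (q n) - real i) / real (q n - p n)"
        apply (rule divide_left_mono) using qi qp by auto
      ultimately show ?thesis using lhs by simp
    next
      case False
      then have "card {k\<in>{p n<..q n}. i < k} = q n - p n" unfolding cardeq by simp
      then have "real (card {k\<in>{p n<..q n}. i < k}) / real (q n - p n) = 1" using qp by simp
      moreover have "1 - real i * inverse (real (q n)) \<le> 1" by simp
      ultimately show ?thesis by (metis)
    qed
  qed
  have l1: "(\<lambda>n. 1 - real i * inverse (real (q n))) \<longlonglongrightarrow> 1"
    using tendsto_diff[OF tendsto_const tendsto_mult_left_zero[OF tendsto_inverse_0_at_top[OF rq]], of 1 "real i"]
    by (simp add: mult.commute)
  show ?thesis by (rule tendsto_sandwich[OF low up l1 tendsto_const])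
qed

context fkc begin

lemma phi_DS:
  fixes p q :: "nat \<Rightarrow> nat"
  assumes phiX: "phi \<subseteq> X" and pq: "\<And>n. p n < q n" and qinf: "filterlim q at_top sequentially"
  shows "phi \<subseteq> DS p q X T"
proof
  fix x assume xp: "x \<in> phi"
  then have "finite {j. x j \<noteq> 0}" by (simp add: phi_def)
  then obtain N where N: "{j. x j \<noteq> 0} \<subseteq> {..<N}" using finite_nat_bounded by blast
  define cc where "cc n i = complex_of_real (real (card {k\<in>{p n<..q n}. i < k}) / real (q n - p n))" for n i
  define v where "v j = (\<lambda>i. if i = j then x j else 0)" for j
  have vX: "v j \<in> X" for j
  proof -
    have "{i. v j i \<noteq> 0} \<subseteq> {j}" by (auto simp: v_def)
    then have "v j \<in> phi" unfolding phi_def using finite_subset by blast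
    then show ?thesis using phiX by blast
  qed
  have clim: "(\<lambda>n. cc n j) \<longlonglongrightarrow> 1" for j
  proof -
    have "(\<lambda>n. complex_of_real (real (card {k\<in>{p n<..q n}. j < k}) / real (q n - p n))) \<longlonglongrightarrow> of_real 1"
      by (rule tendsto_of_real[OF coef_lim[OF pq qinf, of j]])
    then show ?thesis by (simp only: of_real_1 cc_def)
  qed
  have Tneq: "Tn p q n x = (\<lambda>i. \<Sum>j<N. cc n j * v j i)" for n
  proof
    fix i
    have s: "(\<Sum>k\<in>{p n<..q n}. seq_section k x i) = of_nat (card {k\<in>{p n<..q n}. i < k}) * x i"
    proof -
      have "(\<Sum>k\<in>{p n<..q n}. seq_section k x i) = (\<Sum>k\<in>{p n<..q n}. if i < k then x i else 0)"
        by (simp add: seq_section_def)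
      also have "\<dots> = (\<Sum>k\<in>{k\<in>{p n<..q n}. i < k}. x i)"
        by (rule sum.inter_filter[symmetric]) simp
      finally show ?thesis by simp
    qed
    have r: "(\<Sum>j<N. cc n j * v j i) = (if i < N then cc n i * x i else 0)"
      by (simp add: v_def if_distrib sum.delta cong: if_cong)
    show "Tn p q n x i = (\<Sum>j<N. cc n j * v j i)"
      unfolding r Tn_def s using N by (auto simp: cc_def field_simps)
  qed
  have xeq: "x = (\<lambda>i. \<Sum>j<N. 1 * v j i)"
  proof
    fix i show "x i = (\<Sum>j<N. 1 * v j i)"
      using N by (auto simp: v_def sum.delta if_distrib cong: if_cong)
  qed
  have "limitin T (\<lambda>n. Tn p q n x) x sequentially"
    unfolding Tneq using combo_limit[of N v cc "\<lambda>j. 1"] vX clim xeq by simp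
  then show "x \<in> DS p q X T" using xp phiX by (auto simp: DS_def)
qed

end


definition vadd :: "seq \<Rightarrow> seq \<Rightarrow> seq" where "vadd a b = (\<lambda>j. a j + b j)"
definition vsc :: "real \<Rightarrow> seq \<Rightarrow> seq" where "vsc t a = (\<lambda>j. complex_of_real t * a j)"
abbreviation vz :: seq where "vz \<equiv> (\<lambda>j. 0)"

definition lingraph :: "seq set \<Rightarrow> (seq \<Rightarrow> real) \<Rightarrow> (seq \<times> real) set \<Rightarrow> bool" where
  "lingraph X p G \<longleftrightarrow> (vz, 0) \<in> G \<and> (\<forall>a r b s. (a, r) \<in> G \<longrightarrow> (b, s) \<in> G \<longrightarrow> (vadd a b, r + s) \<in> G)
     \<and> (\<forall>a r t. (a, r) \<in> G \<longrightarrow> (vsc t a, t * r) \<in> G) \<and> (\<forall>a r. (a, r) \<in> G \<longrightarrow> a \<in> X \<and> r \<le> p a)"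

lemma vadd_z[simp]: "vadd vz a = a" "vadd a vz = a" by (auto simp: vadd_def)
lemma vsc_0[simp]: "vsc 0 a = vz" by (auto simp: vsc_def)
lemma vsc_1[simp]: "vsc 1 a = a" by (auto simp: vsc_def)
lemma vsc_z[simp]: "vsc t vz = vz" by (auto simp: vsc_def)
lemma vadd_neg[simp]: "vadd a (vsc (-1) a) = vz" by (auto simp: vsc_def vadd_def)

lemma lgD:
  assumes "lingraph X p G"
  shows "(vz, 0) \<in> G" "\<And>a r b s. (a, r) \<in> G \<Longrightarrow> (b, s) \<in> G \<Longrightarrow> (vadd a b, r + s) \<in> G"
    "\<And>a r t. (a, r) \<in> G \<Longrightarrow> (vsc t a, t * r) \<in> G"
    "\<And>a r. (a, r) \<in> G \<Longrightarrow> a \<in> X" "\<And>a r. (a, r) \<in> G \<Longrightarrow> r \<le> p a"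
  using assms unfolding lingraph_def by blast+

lemma lgI:
  assumes "(vz, 0) \<in> G" "\<And>a r b s. (a, r) \<in> G \<Longrightarrow> (b, s) \<in> G \<Longrightarrow> (vadd a b, r + s) \<in> G"
    "\<And>a r t. (a, r) \<in> G \<Longrightarrow> (vsc t a, t * r) \<in> G"
    "\<And>a r. (a, r) \<in> G \<Longrightarrow> a \<in> X" "\<And>a r. (a, r) \<in> G \<Longrightarrow> r \<le> p a"
  shows "lingraph X p G"
  using assms unfolding lingraph_def by blast

locale hbctx =
  fixes X :: "seq set" and p :: "seq \<Rightarrow> real"
  assumes zX: "vz \<in> X" and addX: "\<And>a b. a \<in> X \<Longrightarrow> b \<in> X \<Longrightarrow> vadd a b \<in> X"
    and scX: "\<And>a t. a \<in> X \<Longrightarrow> vsc t a \<in> X"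
    and psub: "\<And>a b. a \<in> X \<Longrightarrow> b \<in> X \<Longrightarrow> p (vadd a b) \<le> p a + p b"
    and phom: "\<And>a t. a \<in> X \<Longrightarrow> t > 0 \<Longrightarrow> p (vsc t a) = t * p a"
    and pz: "p vz = 0"
begin

lemma lg_unique:
  assumes "lingraph X p G" "(a, r) \<in> G" "(a, s) \<in> G" shows "r = s"
proof -
  have "(vsc (-1) a, - s) \<in> G" "(vsc (-1) a, - r) \<in> G"
    using lgD(3)[OF assms(1) assms(3), of "-1"] lgD(3)[OF assms(1) assms(2), of "-1"] by simp_all
  then have "(vadd a (vsc (-1) a), r + - s) \<in> G" "(vadd a (vsc (-1) a), s + - r) \<in> G"
    using lgD(2)[OF assms(1)] assms by blast+
  then have "r + - s \<le> p vz" "s + - r \<le> p vz" using lgD(5)[OF assms(1)] by auto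
  then have "r - s \<le> 0" "s - r \<le> 0" using pz by auto
  then show ?thesis by simp
qed

lemma extend:
  assumes G: "lingraph X p G" and yX: "y \<in> X" and ny: "\<And>r. (y, r) \<notin> G"
  shows "\<exists>G'. lingraph X p G' \<and> G \<subseteq> G' \<and> G' \<noteq> G"
proof -
  have Gadd: "(a, r) \<in> G \<Longrightarrow> (b, s) \<in> G \<Longrightarrow> (vadd a b, r + s) \<in> G" for a r b s
    using G unfolding lingraph_def by blast
  have Gsc: "(a, r) \<in> G \<Longrightarrow> (vsc t a, t * r) \<in> G" for a r t
    using G unfolding lingraph_def by blast
  have GX: "(a, r) \<in> G \<Longrightarrow> a \<in> X" for a r
    using G unfolding lingraph_def by blast
  have Gp: "(a, r) \<in> G \<Longrightarrow> r \<le> p a" for a r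
    using G unfolding lingraph_def by blast
  have G0: "(vz, 0) \<in> G" using G unfolding lingraph_def by blast
  define S where "S = {r - p (vadd a (vsc (-1) y)) | a r. (a, r) \<in> G}"
  define c where "c = Sup S"
  have K: "r - p (vadd a (vsc (-1) y)) \<le> p (vadd b y) - s" if "(a, r) \<in> G" "(b, s) \<in> G" for a r b s
  proof -
    have "r + s \<le> p (vadd a b)" using Gadd[OF that] Gp by blast
    also have "vadd a b = vadd (vadd a (vsc (-1) y)) (vadd b y)"
      by (auto simp: vadd_def vsc_def)
    also have "p \<dots> \<le> p (vadd a (vsc (-1) y)) + p (vadd b y)"
      using that GX yX by (intro psub addX scX) auto
    finally show ?thesis by simp
  qed
  have Sne: "S \<noteq> {}" using G0 unfolding S_def by blast
  have Sbdd: "bdd_above S"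
    unfolding bdd_above_def S_def using K[OF _ G0] by auto
  have c_ge: "r - p (vadd a (vsc (-1) y)) \<le> c" if "(a, r) \<in> G" for a r
    unfolding c_def using that Sbdd by (intro cSup_upper) (auto simp: S_def)
  have c_le: "c \<le> p (vadd b y) - s" if "(b, s) \<in> G" for b s
    unfolding c_def using Sne by (rule cSup_least) (auto simp: S_def intro: K[OF _ that])
  define G' where "G' = {(vadd a (vsc t y), r + t * c) | a r t. (a, r) \<in> G}"
  have dom: "r + t * c \<le> p (vadd a (vsc t y))" if ar: "(a, r) \<in> G" for a r t
  proof (cases "t = 0")
    case True then show ?thesis using Gp[OF ar] by simp
  next
    case False
    show ?thesis
    proof (cases "t > 0")
      case True
      have m: "(vsc (1/t) a, (1/t) * r) \<in> G" using Gsc[OF ar] .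
      have "c \<le> p (vadd (vsc (1/t) a) y) - (1/t) * r" using c_le[OF m] .
      then have "t * c \<le> t * p (vadd (vsc (1/t) a) y) - r"
        using True by (simp add: field_simps)
      also have "t * p (vadd (vsc (1/t) a) y) = p (vsc t (vadd (vsc (1/t) a) y))"
        using True GX[OF ar] yX by (simp add: phom addX scX)
      also have "vsc t (vadd (vsc (1/t) a) y) = vadd a (vsc t y)"
        using True by (auto simp: vadd_def vsc_def field_simps)
      finally show ?thesis by simp
    next
      case False2: False
      define s where "s = - t"
      have s0: "s > 0" using False False2 s_def by simp
      have m: "(vsc (1/s) a, (1/s) * r) \<in> G" using Gsc[OF ar] .
      have "(1/s) * r - p (vadd (vsc (1/s) a) (vsc (-1) y)) \<le> c" using c_ge[OF m] .
      then have "r - s * p (vadd (vsc (1/s) a) (vsc (-1) y)) \<le> s * c"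
        using s0 by (simp add: field_simps)
      also have "s * p (vadd (vsc (1/s) a) (vsc (-1) y)) = p (vsc s (vadd (vsc (1/s) a) (vsc (-1) y)))"
        using s0 GX[OF ar] yX by (simp add: phom addX scX)
      also have "vsc s (vadd (vsc (1/s) a) (vsc (-1) y)) = vadd a (vsc t y)"
        using s0 by (auto simp: vadd_def vsc_def field_simps s_def)
      finally show ?thesis by (simp add: s_def)
    qed
  qed
  have "lingraph X p G'"
    unfolding lingraph_def
  proof (intro conjI allI impI)
    show "(vz, 0) \<in> G'" unfolding G'_def using G0 by (auto intro!: exI[of _ vz] exI[of _ 0])
  next
    fix a r b s assume "(a, r) \<in> G'" "(b, s) \<in> G'"
    then obtain a1 r1 t1 a2 r2 t2 where e: "a = vadd a1 (vsc t1 y)" "r = r1 + t1 * c" "(a1, r1) \<in> G"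
      "b = vadd a2 (vsc t2 y)" "s = r2 + t2 * c" "(a2, r2) \<in> G" unfolding G'_def by blast
    have "vadd a b = vadd (vadd a1 a2) (vsc (t1 + t2) y)" unfolding e
      by (auto simp: vadd_def vsc_def algebra_simps)
    moreover have "r + s = (r1 + r2) + (t1 + t2) * c" unfolding e by (simp add: algebra_simps)
    ultimately show "(vadd a b, r + s) \<in> G'" unfolding G'_def using Gadd[OF e(3) e(6)] by blast
  next
    fix a r t assume "(a, r) \<in> G'"
    then obtain a1 r1 t1 where e: "a = vadd a1 (vsc t1 y)" "r = r1 + t1 * c" "(a1, r1) \<in> G"
      unfolding G'_def by blast
    have "vsc t a = vadd (vsc t a1) (vsc (t * t1) y)" unfolding e
      by (auto simp: vadd_def vsc_def algebra_simps)
    moreover have "t * r = t * r1 + (t * t1) * c" unfolding e by (simp add: algebra_simps)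
    ultimately show "(vsc t a, t * r) \<in> G'" unfolding G'_def using Gsc[OF e(3)] by blast
  next
    fix a r assume "(a, r) \<in> G'"
    then obtain a1 r1 t1 where e: "a = vadd a1 (vsc t1 y)" "r = r1 + t1 * c" "(a1, r1) \<in> G"
      unfolding G'_def by blast
    show "a \<in> X" unfolding e using GX[OF e(3)] yX by (intro addX scX)
    show "r \<le> p a" unfolding e using dom[OF e(3)] by simp
  qed
  moreover have "G \<subseteq> G'"
  proof
    fix z assume "z \<in> G"
    then obtain a r where z: "z = (a, r)" "(a, r) \<in> G" by (cases z) auto
    then have "(vadd a (vsc 0 y), r + 0 * c) \<in> G'" unfolding G'_def by blast
    then show "z \<in> G'" using z by simp
  qed
  moreover have "(y, c) \<in> G'"
  proof -
    have "(vadd vz (vsc 1 y), 0 + 1 * c) \<in> G'" unfolding G'_def using G0 by blast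
    then show ?thesis by simp
  qed
  then have "G' \<noteq> G" using ny by blast
  ultimately show ?thesis by blast
qed

lemma hahn_banach:
  assumes G0: "lingraph X p G0"
  shows "\<exists>g. (\<forall>a\<in>X. \<forall>b\<in>X. g (vadd a b) = g a + g b) \<and> (\<forall>a\<in>X. \<forall>t. g (vsc t a) = t * g a)
           \<and> (\<forall>a\<in>X. g a \<le> p a) \<and> (\<forall>a r. (a, r) \<in> G0 \<longrightarrow> g a = r)"
proof -
  define A where "A = {G. lingraph X p G \<and> G0 \<subseteq> G}"
  have "\<exists>M\<in>A. \<forall>G\<in>A. M \<subseteq> G \<longrightarrow> G = M"
  proof (rule Zorn_Lemma2, rule ballI)
    fix C assume C: "C \<in> chains A"
    show "\<exists>U\<in>A. \<forall>G\<in>C. G \<subseteq> U"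
    proof (cases "C = {}")
      case True then show ?thesis using G0 unfolding A_def by auto
    next
      case False
      have CA: "C \<subseteq> A" and ch: "\<And>G H. G \<in> C \<Longrightarrow> H \<in> C \<Longrightarrow> G \<subseteq> H \<or> H \<subseteq> G"
        using C unfolding chains_def chain_subset_def by auto
      have lg: "G \<in> C \<Longrightarrow> lingraph X p G" for G using CA unfolding A_def by auto
      have "lingraph X p (\<Union>C)"
      proof (rule lgI)
        obtain G where "G \<in> C" using False by auto
        then show "(vz, 0) \<in> \<Union>C" using lgD(1)[OF lg] by blast
      next
        fix a r b s assume "(a, r) \<in> \<Union>C" "(b, s) \<in> \<Union>C"
        then obtain G H where GH: "G \<in> C" "H \<in> C" "(a, r) \<in> G" "(b, s) \<in> H" by auto
        show "(vadd a b, r + s) \<in> \<Union>C"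
        proof (cases "G \<subseteq> H")
          case True
          then have "(vadd a b, r + s) \<in> H" using lgD(2)[OF lg[OF GH(2)]] GH by blast
          then show ?thesis using GH by blast
        next
          case False
          then have "H \<subseteq> G" using ch GH by blast
          then have "(vadd a b, r + s) \<in> G" using lgD(2)[OF lg[OF GH(1)]] GH by blast
          then show ?thesis using GH by blast
        qed
      next
        fix a r t assume "(a, r) \<in> \<Union>C"
        then obtain G where "G \<in> C" "(a, r) \<in> G" by auto
        then show "(vsc t a, t * r) \<in> \<Union>C" using lgD(3)[OF lg] by blast
      next
        fix a r assume "(a, r) \<in> \<Union>C"
        then obtain G where "G \<in> C" "(a, r) \<in> G" by auto
        then show "a \<in> X" "r \<le> p a" using lgD(4,5)[OF lg] by blast+
      qed
      moreover have "G0 \<subseteq> \<Union>C" using False CA unfolding A_def by auto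
      ultimately show ?thesis unfolding A_def by blast
    qed
  qed
  then obtain M where MA: "M \<in> A" and Mmax: "\<And>G. G \<in> A \<Longrightarrow> M \<subseteq> G \<Longrightarrow> G = M" by blast
  have M: "lingraph X p M" and G0M: "G0 \<subseteq> M" using MA unfolding A_def by auto
  have full: "\<exists>r. (y, r) \<in> M" if yX: "y \<in> X" for y
  proof (rule ccontr)
    assume "\<nexists>r. (y, r) \<in> M"
    then obtain G' where G': "lingraph X p G'" "M \<subseteq> G'" "G' \<noteq> M" using extend[OF M yX] by blast
    then have "G' \<in> A" using G0M unfolding A_def by blast
    then show False using Mmax G' by blast
  qed
  define g where "g y = (SOME r. (y, r) \<in> M)" for y
  have gM: "(y, g y) \<in> M" if "y \<in> X" for y unfolding g_def using full[OF that] by (rule someI_ex)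
  have gu: "(y, r) \<in> M \<Longrightarrow> g y = r" for y r
    using lg_unique[OF M] gM lgD(4)[OF M] by blast
  show ?thesis
  proof (intro exI[of _ g] conjI ballI allI impI)
    fix a b assume "a \<in> X" "b \<in> X"
    then show "g (vadd a b) = g a + g b" using gM gu lgD(2)[OF M] by blast
  next
    fix a t assume "a \<in> X"
    then show "g (vsc t a) = t * g a" using gM gu lgD(3)[OF M] by blast
  next
    fix a assume "a \<in> X"
    then show "g a \<le> p a" using gM lgD(5)[OF M] by blast
  next
    fix a r assume "(a, r) \<in> G0"
    then show "g a = r" using gu G0M by blast
  qed
qed

end


lemma vadd_seq: "seq_add a b = vadd a b" by (simp add: seq_add_def vadd_def)

lemma phi_add: "a \<in> phi \<Longrightarrow> b \<in> phi \<Longrightarrow> vadd a b \<in> phi"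
proof -
  assume "a \<in> phi" "b \<in> phi"
  then have "finite ({j. a j \<noteq> 0} \<union> {j. b j \<noteq> 0})" by (simp add: phi_def)
  moreover have "{j. vadd a b j \<noteq> 0} \<subseteq> {j. a j \<noteq> 0} \<union> {j. b j \<noteq> 0}" by (auto simp: vadd_def)
  ultimately show ?thesis unfolding phi_def using finite_subset by blast
qed

lemma phi_cmul: "a \<in> phi \<Longrightarrow> (\<lambda>j. c * a j) \<in> phi"
proof -
  assume "a \<in> phi"
  then have "finite {j. a j \<noteq> 0}" by (simp add: phi_def)
  moreover have "{j. c * a j \<noteq> 0} \<subseteq> {j. a j \<noteq> 0}" by auto
  ultimately show ?thesis unfolding phi_def using finite_subset by blast
qed

lemma phi_vsc: "a \<in> phi \<Longrightarrow> vsc t a \<in> phi"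
  unfolding vsc_def by (rule phi_cmul)

lemma phi_z: "vz \<in> phi" by (simp add: phi_def)

context fkc begin

lemma vaddX: "a \<in> X \<Longrightarrow> b \<in> X \<Longrightarrow> vadd a b \<in> X"
  using lin_in[of a b 1 1] by (simp add: vadd_def)
lemma vscX: "a \<in> X \<Longrightarrow> vsc t a \<in> X"
  using lin1_in[of a "complex_of_real t"] by (simp add: vsc_def)

lemma separate:
  assumes phiX: "phi \<subseteq> X" and xX: "x \<in> X" and xn: "x \<notin> T closure_of phi"
  shows "\<exists>f\<in>cdual X T. (\<forall>\<psi>\<in>phi. f \<psi> = 0) \<and> f x \<noteq> 0"
proof -
  obtain U where U: "openin T U" "x \<in> U" "U \<inter> phi = {}"
    using xn xX unfolding in_closure_of by auto
  obtain V where V: "openin T V" "x \<in> V" "V \<subseteq> U"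
    and Vc: "\<And>y z t. y \<in> V \<Longrightarrow> z \<in> V \<Longrightarrow> 0 \<le> t \<Longrightarrow> t \<le> 1 \<Longrightarrow>
          (\<lambda>j. of_real t * y j + of_real (1 - t) * z j) \<in> V"
    using fk U unfolding FK_space_def by meson
  define W where "W = {y \<in> topspace T. (\<lambda>j. (-1) * y j + x j) \<in> V}"
  have Wo: "openin T W" unfolding W_def
    by (rule openin_continuous_map_preimage[OF aff_cont[OF xX] V(1)])
  have WX: "W \<subseteq> X" unfolding W_def by auto
  have zW: "vz \<in> W" unfolding W_def using V by simp
  have Wc: "(\<lambda>j. of_real t * y j + of_real (1 - t) * z j) \<in> W"
    if "y \<in> W" "z \<in> W" "0 \<le> t" "t \<le> 1" for y z t
  proof -
    have "(\<lambda>j. of_real t * ((-1) * y j + x j) + of_real (1 - t) * ((-1) * z j + x j)) \<in> V"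
      using that by (intro Vc) (auto simp: W_def)
    moreover have eq: "(\<lambda>j. (-1) * (of_real t * y j + of_real (1 - t) * z j) + x j)
       = (\<lambda>j. of_real t * ((-1) * y j + x j) + of_real (1 - t) * ((-1) * z j + x j))"
      by (auto simp: algebra_simps)
    moreover have "(\<lambda>j. of_real t * y j + of_real (1 - t) * z j) \<in> X"
      using that WX by (intro lin_in) auto
    ultimately show ?thesis unfolding W_def mem_Collect_eq top eq by blast
  qed
  have Wdis: "vadd \<psi> x \<notin> W" if "\<psi> \<in> phi" for \<psi>
  proof
    assume "vadd \<psi> x \<in> W"
    then have "(\<lambda>j. (-1) * \<psi> j) \<in> V" unfolding W_def vadd_def by (simp add: algebra_simps)
    moreover have "(\<lambda>j. (-1) * \<psi> j) \<in> phi" using phi_cmul[OF that] .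
    ultimately show False using U V by blast
  qed
  have absorb: "\<exists>t>0. vsc (1/t) y \<in> W" if yX: "y \<in> X" for y
  proof -
    have "openin euclidean {s \<in> topspace euclidean. seq_smult s y \<in> W}"
      by (rule openin_continuous_map_preimage[OF ray_cont[OF yX] Wo])
    then have "open {s. seq_smult s y \<in> W}" by simp
    moreover have "0 \<in> {s. seq_smult s y \<in> W}" using zW by (simp add: seq_smult_def)
    ultimately obtain d where d: "d > 0" "ball 0 d \<subseteq> {s. seq_smult s y \<in> W}"
      using open_contains_ball by blast
    have "complex_of_real (d/2) \<in> ball 0 d" using d(1) by (simp add: dist_norm)
    then have "seq_smult (complex_of_real (d/2)) y \<in> W" using d(2) by blast
    then have "vsc (1 / (2/d)) y \<in> W" by (simp add: vsc_def seq_smult_def)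
    then show ?thesis using d(1) by (intro exI[of _ "2/d"]) auto
  qed
  define P where "P y = {t. t > 0 \<and> vsc (1/t) y \<in> W}" for y
  define p where "p y = Inf (P y)" for y
  have Pne: "P y \<noteq> {}" if "y \<in> X" for y using absorb[OF that] unfolding P_def by auto
  have Pbdd: "bdd_below (P y)" for y unfolding P_def bdd_below_def by (rule exI[of _ 0]) auto
  have Kp: "p y \<le> t" if "t > 0" "vsc (1/t) y \<in> W" for y t
    unfolding p_def using that by (intro cInf_lower Pbdd) (auto simp: P_def)
  have p0: "p y \<ge> 0" if "y \<in> X" for y
    unfolding p_def using Pne[OF that] by (rule cInf_greatest) (auto simp: P_def)
  have K: "vsc (1/s) y \<in> W" if yX: "y \<in> X" and s: "s > p y" for y s
  proof -
    obtain t where t: "t \<in> P y" "t < s" using cInf_lessD[OF Pne[OF yX], of s] s unfolding p_def by blast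
    have t0: "t > 0" and tW: "vsc (1/t) y \<in> W" using t unfolding P_def by auto
    have s0: "s > 0" using t0 t by simp
    have "(\<lambda>j. of_real (t/s) * vsc (1/t) y j + of_real (1 - t/s) * vz j) \<in> W"
      using t0 s0 t by (intro Wc[OF tW zW]) auto
    moreover have "(\<lambda>j. of_real (t/s) * vsc (1/t) y j + of_real (1 - t/s) * vz j) = vsc (1/s) y"
      using t0 s0 by (auto simp: vsc_def)
    ultimately show ?thesis by simp
  qed
  have pz: "p vz = 0"
  proof -
    have "p vz \<le> e" if "e > 0" for e using Kp[OF that] zW by simp
    then have "p vz \<le> 0" by (meson dense_ge)
    then show ?thesis using p0[of vz] by simp
  qed
  have phom_le: "p (vsc \<sigma> a) \<le> \<sigma> * p a" if aX: "a \<in> X" and \<sigma>: "\<sigma> > 0" for a \<sigma>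
  proof -
    have "p (vsc \<sigma> a) / \<sigma> \<le> s" if s: "s > p a" for s
    proof -
      have s0: "s > 0" using p0[OF aX] s by simp
      have "vsc (1 / (\<sigma> * s)) (vsc \<sigma> a) = vsc (1/s) a" using \<sigma> by (auto simp: vsc_def)
      then have "vsc (1 / (\<sigma> * s)) (vsc \<sigma> a) \<in> W" using K[OF aX s] by simp
      then have "p (vsc \<sigma> a) \<le> \<sigma> * s" using \<sigma> s0 by (intro Kp) auto
      then show ?thesis using \<sigma> by (simp add: field_simps)
    qed
    then have "p (vsc \<sigma> a) / \<sigma> \<le> p a" by (meson dense_ge)
    then show ?thesis using \<sigma> by (simp add: field_simps)
  qed
  have phom: "p (vsc \<sigma> a) = \<sigma> * p a" if aX: "a \<in> X" and \<sigma>: "\<sigma> > 0" for a \<sigma>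
  proof -
    have "p (vsc (1/\<sigma>) (vsc \<sigma> a)) \<le> (1/\<sigma>) * p (vsc \<sigma> a)"
      using \<sigma> aX by (intro phom_le vscX) auto
    moreover have "vsc (1/\<sigma>) (vsc \<sigma> a) = a" using \<sigma> by (auto simp: vsc_def)
    ultimately have "\<sigma> * p a \<le> p (vsc \<sigma> a)" using \<sigma> by (simp add: field_simps)
    then show ?thesis using phom_le[OF aX \<sigma>] by simp
  qed
  have psub: "p (vadd a b) \<le> p a + p b" if aX: "a \<in> X" and bX: "b \<in> X" for a b
  proof -
    have main: "p (vadd a b) \<le> s + t" if s: "s > p a" and t: "t > p b" for s t
    proof -
      have s0: "s > 0" using p0[OF aX] s by simp
      have t0: "t > 0" using p0[OF bX] t by simp
      have "(\<lambda>j. of_real (s/(s+t)) * vsc (1/s) a j + of_real (1 - s/(s+t)) * vsc (1/t) b j) \<in> W"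
        using s0 t0 by (intro Wc K aX bX s t) auto
      moreover have "(\<lambda>j. of_real (s/(s+t)) * vsc (1/s) a j + of_real (1 - s/(s+t)) * vsc (1/t) b j)
          = vsc (1/(s+t)) (vadd a b)"
      proof
        fix j
        have e: "1 - s/(s+t) = t/(s+t)" using s0 t0 by (simp add: field_simps)
        show "of_real (s/(s+t)) * vsc (1/s) a j + of_real (1 - s/(s+t)) * vsc (1/t) b j
          = vsc (1/(s+t)) (vadd a b) j"
          unfolding e using s0 t0 by (simp add: vsc_def vadd_def field_simps add_divide_distrib[symmetric])
      qed
      ultimately show ?thesis using s0 t0 by (intro Kp) auto
    qed
    have "p (vadd a b) - s \<le> p b" if s: "s > p a" for s
    proof -
      have "p (vadd a b) - s \<le> t" if "t > p b" for t using main[OF s that] by simp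
      then show ?thesis by (meson dense_ge)
    qed
    then have "p (vadd a b) - p b \<le> p a"
      by (metis (no_types, lifting) dense_ge diff_le_eq add.commute)
    then show ?thesis by simp
  qed
  interpret hb: hbctx X p
    by unfold_locales (auto simp: vaddX vscX psub phom pz)
  define G0 where "G0 = {(vadd \<psi> (vsc t x), t) | \<psi> t. \<psi> \<in> phi}"
  have G0lg: "lingraph X p G0"
  proof (rule lgI)
    have "(vadd vz (vsc 0 x), 0) \<in> G0" unfolding G0_def using phi_z by blast
    then show "(vz, 0) \<in> G0" by simp
  next
    fix a r b s assume "(a, r) \<in> G0" "(b, s) \<in> G0"
    then obtain \<psi>1 \<psi>2 where e: "a = vadd \<psi>1 (vsc r x)" "\<psi>1 \<in> phi" "b = vadd \<psi>2 (vsc s x)" "\<psi>2 \<in> phi"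
      unfolding G0_def by blast
    have "vadd a b = vadd (vadd \<psi>1 \<psi>2) (vsc (r + s) x)" unfolding e
      by (auto simp: vadd_def vsc_def algebra_simps)
    then show "(vadd a b, r + s) \<in> G0" unfolding G0_def using phi_add[OF e(2) e(4)] by blast
  next
    fix a r t assume "(a, r) \<in> G0"
    then obtain \<psi> where e: "a = vadd \<psi> (vsc r x)" "\<psi> \<in> phi" unfolding G0_def by blast
    have "vsc t a = vadd (vsc t \<psi>) (vsc (t * r) x)" unfolding e
      by (auto simp: vadd_def vsc_def algebra_simps)
    then show "(vsc t a, t * r) \<in> G0" unfolding G0_def using phi_vsc[OF e(2)] by blast
  next
    fix a r assume "(a, r) \<in> G0"
    then obtain \<psi> where e: "a = vadd \<psi> (vsc r x)" "\<psi> \<in> phi" unfolding G0_def by blast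
    show "a \<in> X" unfolding e using e(2) phiX xX by (intro vaddX vscX) auto
    show "r \<le> p a"
    proof (cases "r > 0")
      case False
      have "a \<in> X" unfolding e using e(2) phiX xX by (intro vaddX vscX) auto
      then show ?thesis using p0 False by force
    next
      case True
      have ps: "vsc (1/r) \<psi> \<in> phi" by (rule phi_vsc[OF e(2)])
      have psX: "vadd (vsc (1/r) \<psi>) x \<in> X" using ps phiX xX by (intro vaddX) auto
      have "p (vadd (vsc (1/r) \<psi>) x) \<ge> 1"
      proof (rule ccontr)
        assume "\<not> ?thesis"
        then have "vsc (1/1) (vadd (vsc (1/r) \<psi>) x) \<in> W" by (intro K psX) auto
        then show False using Wdis[OF ps] by simp
      qed
      moreover have "a = vsc r (vadd (vsc (1/r) \<psi>) x)" unfolding e using True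
        by (auto simp: vadd_def vsc_def algebra_simps)
      ultimately show ?thesis using phom[OF psX True] True
        by (metis mult.commute mult_le_cancel_left1 order_less_imp_not_less)
    qed
  qed
  obtain g where gadd: "\<And>a b. a \<in> X \<Longrightarrow> b \<in> X \<Longrightarrow> g (vadd a b) = g a + g b"
    and gsc: "\<And>a t. a \<in> X \<Longrightarrow> g (vsc t a) = t * g a"
    and gp: "\<And>a. a \<in> X \<Longrightarrow> g a \<le> p a"
    and g0: "\<And>a r. (a, r) \<in> G0 \<Longrightarrow> g a = r"
    using hb.hahn_banach[OF G0lg] by blast
  have gW: "\<bar>g z\<bar> \<le> 1" if "z \<in> W" "vsc (-1) z \<in> W" for z
  proof -
    have zX: "z \<in> X" using that WX by auto
    have "g z \<le> 1" using gp[OF zX] Kp[of 1 z] that by simp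
    moreover have "g (vsc (-1) z) \<le> 1"
    proof -
      have "p (vsc (-1) z) \<le> 1" using Kp[of 1 "vsc (-1) z"] that by simp
      then show ?thesis using gp[OF vscX[OF zX, of "-1"]] by linarith
    qed
    ultimately show ?thesis using gsc[OF zX, of "-1"] by simp
  qed
  have gcont: "continuous_map T euclideanreal g"
    unfolding continuous_map_def
  proof (intro conjI allI impI)
    show "g \<in> topspace T \<rightarrow> topspace euclideanreal" by simp
  next
    fix Q :: "real set" assume "openin euclideanreal Q"
    then have Oo: "open Q" by simp
    show "openin T {y \<in> topspace T. g y \<in> Q}"
    proof (subst openin_subopen, intro ballI)
      fix y0 assume y0: "y0 \<in> {y \<in> topspace T. g y \<in> Q}"
      then have y0X: "y0 \<in> X" and gy0: "g y0 \<in> Q" by auto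
      obtain e where e: "e > 0" "ball (g y0) e \<subseteq> Q" using Oo gy0 open_contains_ball by blast
      define c where "c = 2 / e"
      have c0: "c > 0" using e by (simp add: c_def)
      define N where "N = {y \<in> topspace T. (\<lambda>j. complex_of_real c * y j + vsc (-c) y0 j) \<in> W}
                        \<inter> {y \<in> topspace T. (\<lambda>j. complex_of_real (-c) * y j + vsc c y0 j) \<in> W}"
      have No: "openin T N" unfolding N_def
        by (intro openin_Int openin_continuous_map_preimage[OF aff_cont Wo] vscX y0X)
      have y0N: "y0 \<in> N" unfolding N_def using y0X zW by (auto simp: vsc_def)
      have "N \<subseteq> {y \<in> topspace T. g y \<in> Q}"
      proof
        fix y assume yN: "y \<in> N"
        then have yX: "y \<in> X" unfolding N_def by auto
        define z where "z = vsc c (vadd y (vsc (-1) y0))"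
        have z1: "z = (\<lambda>j. complex_of_real c * y j + vsc (-c) y0 j)"
          unfolding z_def by (auto simp: vsc_def vadd_def algebra_simps)
        have z2: "vsc (-1) z = (\<lambda>j. complex_of_real (-c) * y j + vsc c y0 j)"
          unfolding z_def by (auto simp: vsc_def vadd_def algebra_simps)
        have zW1: "z \<in> W" unfolding z1 using yN unfolding N_def by blast
        have zW2: "vsc (-1) z \<in> W" unfolding z2 using yN unfolding N_def by blast
        have "\<bar>g z\<bar> \<le> 1" using gW[OF zW1 zW2] .
        moreover have "g z = c * (g y - g y0)"
          unfolding z_def using yX y0X by (simp add: gsc gadd vscX vaddX algebra_simps)
        ultimately have "c * \<bar>g y - g y0\<bar> \<le> 1" using c0 by (simp add: abs_mult)
        then have "\<bar>g y - g y0\<bar> \<le> 1 / c" using c0 by (simp add: field_simps)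
        then have "\<bar>g y - g y0\<bar> \<le> e / 2" unfolding c_def by simp
        then have "g y \<in> ball (g y0) e" using e by (simp add: dist_real_def abs_minus_commute)
        then show "y \<in> {y \<in> topspace T. g y \<in> Q}" using e yX by auto
      qed
      then show "\<exists>N. openin T N \<and> y0 \<in> N \<and> N \<subseteq> {y \<in> topspace T. g y \<in> Q}"
        using No y0N by blast
    qed
  qed
  define f where "f y = complex_of_real (g y) - \<i> * complex_of_real (g (seq_smult \<i> y))" for y
  have iv: "seq_smult \<i> y = (\<lambda>j. \<i> * y j)" for y by (simp add: seq_smult_def)
  have fc: "f \<in> cdual X T"
    unfolding cdual_def mem_Collect_eq
  proof (intro conjI ballI allI)
    fix a b assume aX: "a \<in> X" and bX: "b \<in> X"
    have "seq_smult \<i> (seq_add a b) = vadd (seq_smult \<i> a) (seq_smult \<i> b)"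
      by (auto simp: seq_smult_def vadd_def seq_add_def algebra_simps)
    then show "f (seq_add a b) = f a + f b"
      unfolding f_def vadd_seq using aX bX by (simp add: gadd smult_in algebra_simps)
  next
    fix c a assume aX: "a \<in> X"
    have iaX: "seq_smult \<i> a \<in> X" using smult_in[OF aX] .
    have e1: "seq_smult c a = vadd (vsc (Re c) a) (vsc (Im c) (seq_smult \<i> a))"
      by (subst complex_eq[of c]) (auto simp: seq_smult_def vadd_def vsc_def algebra_simps)
    have e2: "seq_smult \<i> (seq_smult c a) = vadd (vsc (Re c) (seq_smult \<i> a)) (vsc (- Im c) a)"
      by (subst complex_eq[of c]) (auto simp: seq_smult_def vadd_def vsc_def algebra_simps)
    have g1: "g (seq_smult c a) = Re c * g a + Im c * g (seq_smult \<i> a)"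
      unfolding e1 using aX iaX by (simp add: gadd gsc vscX)
    have g2: "g (seq_smult \<i> (seq_smult c a)) = Re c * g (seq_smult \<i> a) - Im c * g a"
      unfolding e2 using aX iaX by (simp add: gadd gsc vscX)
    show "f (seq_smult c a) = c * f a"
      unfolding f_def g1 g2 by (subst (3) complex_eq[of c]) (simp add: algebra_simps)
  next
    have c1: "continuous_map T euclidean (\<lambda>y. complex_of_real (g y))"
      using continuous_map_compose[OF gcont, of euclidean "complex_of_real"]
      by (simp add: o_def continuous_on_of_real continuous_on_id)
    have gi: "continuous_map T euclideanreal (\<lambda>y. g (seq_smult \<i> y))"
    proof -
      have "continuous_map T T (\<lambda>y. seq_smult \<i> y)"
        using cont_smult[of T "\<lambda>y. \<i>" "\<lambda>y. y"] continuous_map_id[of T] by (simp add: id_def)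
      from continuous_map_compose[OF this gcont] show ?thesis by (simp add: o_def)
    qed
    have c2: "continuous_map T euclidean (\<lambda>y. \<i> * complex_of_real (g (seq_smult \<i> y)))"
    proof -
      have "continuous_on UNIV (\<lambda>r::real. \<i> * complex_of_real r)"
        by (intro continuous_intros)
      then show ?thesis using continuous_map_compose[OF gi, of euclidean "\<lambda>r. \<i> * complex_of_real r"]
        by (simp add: o_def)
    qed
    show "continuous_map T euclidean f"
      unfolding f_def by (rule continuous_map_diff[OF c1 c2])
  qed
  have fphi: "f \<psi> = 0" if "\<psi> \<in> phi" for \<psi>
  proof -
    have "(vadd \<psi> (vsc 0 x), 0) \<in> G0" unfolding G0_def using that by blast
    then have "g \<psi> = 0" using g0 by fastforce
    moreover have "seq_smult \<i> \<psi> \<in> phi" unfolding iv by (rule phi_cmul[OF that])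
    then have "(vadd (seq_smult \<i> \<psi>) (vsc 0 x), 0) \<in> G0" unfolding G0_def by blast
    then have "g (seq_smult \<i> \<psi>) = 0" using g0 by fastforce
    ultimately show ?thesis unfolding f_def by simp
  qed
  have "(vadd vz (vsc 1 x), 1) \<in> G0" unfolding G0_def using phi_z by blast
  then have "g x = 1" using g0 by fastforce
  then have "Re (f x) = 1" unfolding f_def by simp
  then have "f x \<noteq> 0" by auto
  then show ?thesis using fc fphi by blast
qed

end


theorem mainTheorem6:
  fixes X :: "seq set" and T :: "seq topology" and p q :: "nat \<Rightarrow> nat"
  assumes "FK_space X T"
    and "phi \<subseteq> X"
    and "\<And>n. p n < q n"
    and "filterlim q at_top sequentially"
  shows "phi \<subseteq> DS p q X T \<and> DS p q X T \<subseteq> DW p q X T \<and> DW p q X T \<subseteq> DF p q X T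
         \<and> DF p q X T \<subseteq> DB p q X T \<and> DB p q X T \<subseteq> X
         \<and> DW p q X T \<subseteq> T closure_of phi"
proof -
  interpret fkc X T using assms(1) by unfold_locales
  have s1: "phi \<subseteq> DS p q X T" by (rule phi_DS[OF assms(2,3,4)])
  have s2: "DS p q X T \<subseteq> DW p q X T"
  proof
    fix x assume "x \<in> DS p q X T"
    then have xX: "x \<in> X" and L: "limitin T (\<lambda>n. Tn p q n x) x sequentially" by (auto simp: DS_def)
    have "(\<lambda>n. f (Tn p q n x)) \<longlonglongrightarrow> f x" if "f \<in> cdual X T" for f
    proof -
      have "continuous_map T euclidean f" using that by (simp add: cdual_def)
      from continuous_map_limit[OF this L] show ?thesis by (simp add: o_def)
    qed
    then show "x \<in> DW p q X T" using xX by (simp add: DW_def)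
  qed
  have s3: "DW p q X T \<subseteq> DF p q X T"
    by (auto simp: DW_def DF_def DFplus_def convergent_def)
  have s4: "DF p q X T \<subseteq> DB p q X T"
    by (auto simp: DB_def DF_def DFplus_def DBplus_def convergent_def intro: convergent_imp_bounded)
  have s5: "DB p q X T \<subseteq> X" by (auto simp: DB_def)
  have s6: "DW p q X T \<subseteq> T closure_of phi"
  proof
    fix x assume xW: "x \<in> DW p q X T"
    then have xX: "x \<in> X" by (simp add: DW_def)
    show "x \<in> T closure_of phi"
    proof (rule ccontr)
      assume "x \<notin> T closure_of phi"
      then obtain f where f: "f \<in> cdual X T" "\<And>\<psi>. \<psi> \<in> phi \<Longrightarrow> f \<psi> = 0" "f x \<noteq> 0"
        using separate[OF assms(2) xX] by blast
      have Tphi: "Tn p q n x \<in> phi" for n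
      proof -
        have "{j. Tn p q n x j \<noteq> 0} \<subseteq> {..<q n}"
        proof
          fix j assume "j \<in> {j. Tn p q n x j \<noteq> 0}"
          then have ne: "Tn p q n x j \<noteq> 0" by simp
          show "j \<in> {..<q n}"
          proof (rule ccontr)
            assume "j \<notin> {..<q n}"
            then have "\<forall>k\<in>{p n<..q n}. seq_section k x j = 0" by (auto simp: seq_section_def)
            then have "Tn p q n x j = 0" by (simp add: Tn_def)
            then show False using ne by simp
          qed
        qed
        then show ?thesis unfolding phi_def using finite_subset by blast
      qed
      have "(\<lambda>n. f (Tn p q n x)) \<longlonglongrightarrow> f x" using xW f(1) by (simp add: DW_def)
      moreover have "(\<lambda>n. f (Tn p q n x)) = (\<lambda>n. 0)" using f(2) Tphi by auto
      ultimately have "f x = 0" using LIMSEQ_unique tendsto_const by metis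
      then show False using f(3) by simp
    qed
  qed
  show ?thesis using s1 s2 s3 s4 s5 s6 by blast
qed


end
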